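(* In the setting below, if $\alpha=0$ or $\alpha$ is a limit ordinal, then there exists $x\in M_{\alpha+1}$ such that $\bigcup x\notin M$.
   Context: Work in ZFA (ZF with a set $A$ of atoms, i.e. urelements that have no elements), extended by a primitive binary relation $\preccurlyeq$ on $A$, with Separation and Replacement holding for formulas mentioning $\preccurlyeq$. $A$ is an infinite set of atoms and $\preccurlyeq$ is a pre-ordering (reflexive, transitive) on $A$ with no minimal elements: for every $a\in A$ there is $b\in A$ with $b\preccurlyeq a$ and not $a\preccurlyeq b$. For $a\in A$, $pr(a)=\{b\in A:b\preccurlyeq a\}$; $LO(A,\preccurlyeq)$ is the set of nonempty $x\subseteq A$ with $pr(a)\subseteq x$ for all $a\in x$. For a set $X$ of sets, $LO(X,\subseteq)$ is the set of nonempty $x\subseteq X$ such that for every $y\in x$ and every $z\in X$ with $z\subseteq y$, $z\in x$. The magmatic hierarchy: $M_1=LO(A,\preccurlyeq)$; $M_{\alpha+1}=LO(M_\alpha,\subseteq)$ for $\alpha\geq1$; $M_\alpha=\bigcup_{1\leq\beta<\alpha}M_\beta$ for limit $\alpha$; $M=\bigcup_{\alpha\geq1}M_\alpha$. $\bigcup x=\{z:\exists y\in x\,(z\in y)\}$, where atoms have no elements (so $\bigcup x=\emptyset$ if $x\subseteq A$). *)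

theory Defs
  imports Main
begin

text \<open>Separation and Replacement are stated
second-order (for arbitrary HOL predicates / functions), which in particular covers
all formulas mentioning the primitive relation le (the pre-ordering on A).\<close>

definition elts :: "('v \<Rightarrow> 'v \<Rightarrow> bool) \<Rightarrow> 'v \<Rightarrow> 'v set" where
  "elts mem x = {z. mem z x}"

locale zfa =
  fixes mem :: "'v \<Rightarrow> 'v \<Rightarrow> bool"
    and atom :: "'v \<Rightarrow> bool"
    and A :: 'v
    and le :: "'v \<Rightarrow> 'v \<Rightarrow> bool"
  assumes atom_no_elts: "atom a \<Longrightarrow> \<not> mem x a"
    and extensionality: "\<not> atom x \<Longrightarrow> \<not> atom y \<Longrightarrow> (\<forall>z. mem z x \<longleftrightarrow> mem z y) \<Longrightarrow> x = y"
    and foundation: "wf {(x, y). mem x y}"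
    and pairing: "\<exists>z. \<not> atom z \<and> (\<forall>w. mem w z \<longleftrightarrow> w = x \<or> w = y)"
    and union: "\<exists>u. \<not> atom u \<and> (\<forall>z. mem z u \<longleftrightarrow> (\<exists>y. mem y x \<and> mem z y))"
    and power: "\<exists>p. \<not> atom p \<and> (\<forall>z. mem z p \<longleftrightarrow> \<not> atom z \<and> (\<forall>w. mem w z \<longrightarrow> mem w x))"
    and separation: "\<exists>y. \<not> atom y \<and> (\<forall>z. mem z y \<longleftrightarrow> mem z x \<and> P z)"
    and replacement: "\<exists>y. \<not> atom y \<and> (\<forall>z. mem z y \<longleftrightarrow> (\<exists>w. mem w x \<and> z = f w))"
    and infinity: "\<exists>I. \<not> atom I \<and> (\<exists>e. mem e I \<and> \<not> atom e \<and> (\<forall>w. \<not> mem w e))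
                    \<and> (\<forall>y. mem y I \<longrightarrow> (\<exists>s. mem s I \<and> \<not> atom s \<and> (\<forall>w. mem w s \<longleftrightarrow> mem w y \<or> w = y)))"
    and A_set: "\<not> atom A"
    and A_atoms: "mem a A \<Longrightarrow> atom a"
    and A_infinite: "infinite (elts mem A)"
    and le_refl: "mem a A \<Longrightarrow> le a a"
    and le_trans: "mem a A \<Longrightarrow> mem b A \<Longrightarrow> mem c A \<Longrightarrow> le a b \<Longrightarrow> le b c \<Longrightarrow> le a c"
    and no_minimal: "mem a A \<Longrightarrow> \<exists>b. mem b A \<and> le b a \<and> \<not> le a b"

definition transset :: "('v \<Rightarrow> 'v \<Rightarrow> bool) \<Rightarrow> ('v \<Rightarrow> bool) \<Rightarrow> 'v \<Rightarrow> bool" where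
  "transset mem atom x \<longleftrightarrow> \<not> atom x \<and> (\<forall>y. mem y x \<longrightarrow> \<not> atom y \<and> (\<forall>z. mem z y \<longrightarrow> mem z x))"

definition Ord :: "('v \<Rightarrow> 'v \<Rightarrow> bool) \<Rightarrow> ('v \<Rightarrow> bool) \<Rightarrow> 'v \<Rightarrow> bool" where
  "Ord mem atom x \<longleftrightarrow> transset mem atom x \<and> (\<forall>y. mem y x \<longrightarrow> transset mem atom y)"

definition succ :: "('v \<Rightarrow> 'v \<Rightarrow> bool) \<Rightarrow> ('v \<Rightarrow> bool) \<Rightarrow> 'v \<Rightarrow> 'v" where
  "succ mem atom x = (THE s. \<not> atom s \<and> (\<forall>w. mem w s \<longleftrightarrow> mem w x \<or> w = x))"

definition Limit :: "('v \<Rightarrow> 'v \<Rightarrow> bool) \<Rightarrow> ('v \<Rightarrow> bool) \<Rightarrow> 'v \<Rightarrow> bool" where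
  "Limit mem atom \<alpha> \<longleftrightarrow> Ord mem atom \<alpha> \<and> elts mem \<alpha> \<noteq> {}
      \<and> \<not> (\<exists>\<beta>. mem \<beta> \<alpha> \<and> \<alpha> = succ mem atom \<beta>)"

definition Uni :: "('v \<Rightarrow> 'v \<Rightarrow> bool) \<Rightarrow> ('v \<Rightarrow> bool) \<Rightarrow> 'v \<Rightarrow> 'v" where
  "Uni mem atom x = (THE u. \<not> atom u \<and> elts mem u = (\<Union>y\<in>elts mem x. elts mem y))"

definition pr :: "('v \<Rightarrow> 'v \<Rightarrow> bool) \<Rightarrow> 'v \<Rightarrow> ('v \<Rightarrow> 'v \<Rightarrow> bool) \<Rightarrow> 'v \<Rightarrow> 'v set" where
  "pr mem A le a = {b \<in> elts mem A. le b a}"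

definition LO_atoms :: "('v \<Rightarrow> 'v \<Rightarrow> bool) \<Rightarrow> ('v \<Rightarrow> bool) \<Rightarrow> 'v \<Rightarrow> ('v \<Rightarrow> 'v \<Rightarrow> bool) \<Rightarrow> 'v set" where
  "LO_atoms mem atom A le = {x. \<not> atom x \<and> elts mem x \<noteq> {} \<and> elts mem x \<subseteq> elts mem A
      \<and> (\<forall>a\<in>elts mem x. pr mem A le a \<subseteq> elts mem x)}"

definition LO_sub :: "('v \<Rightarrow> 'v \<Rightarrow> bool) \<Rightarrow> ('v \<Rightarrow> bool) \<Rightarrow> 'v set \<Rightarrow> 'v set" where
  "LO_sub mem atom X = {x. \<not> atom x \<and> elts mem x \<noteq> {} \<and> elts mem x \<subseteq> X
      \<and> (\<forall>y\<in>elts mem x. \<forall>z\<in>X. elts mem z \<subseteq> elts mem y \<longrightarrow> z \<in> elts mem x)}"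

text \<open>The magmatic hierarchy M_alpha (alpha an ordinal; M_0 is unused and empty).\<close>
definition Mlev :: "('v \<Rightarrow> 'v \<Rightarrow> bool) \<Rightarrow> ('v \<Rightarrow> bool) \<Rightarrow> 'v \<Rightarrow> ('v \<Rightarrow> 'v \<Rightarrow> bool) \<Rightarrow> 'v \<Rightarrow> 'v set" where
  "Mlev mem atom A le = wfrec {(x, y). mem x y}
     (\<lambda>H \<alpha>. if \<not> Ord mem atom \<alpha> then {}
            else if (\<exists>\<beta>. mem \<beta> \<alpha> \<and> \<alpha> = succ mem atom \<beta>) then
              (let \<beta> = (THE \<beta>. mem \<beta> \<alpha> \<and> \<alpha> = succ mem atom \<beta>) in
                 if elts mem \<beta> = {} then LO_atoms mem atom A le else LO_sub mem atom (H \<beta>))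
            else (\<Union>\<beta>\<in>{\<beta>. mem \<beta> \<alpha> \<and> elts mem \<beta> \<noteq> {}}. H \<beta>))"

definition Mclass :: "('v \<Rightarrow> 'v \<Rightarrow> bool) \<Rightarrow> ('v \<Rightarrow> bool) \<Rightarrow> 'v \<Rightarrow> ('v \<Rightarrow> 'v \<Rightarrow> bool) \<Rightarrow> 'v set" where
  "Mclass mem atom A le = (\<Union>\<alpha>\<in>{\<alpha>. Ord mem atom \<alpha> \<and> elts mem \<alpha> \<noteq> {}}. Mlev mem atom A le \<alpha>)"

end

theory Submission
  imports Defs
begin

context zfa begin

abbreviation el where "el \<equiv> elts mem"
abbreviation Mv where "Mv \<equiv> Mlev mem atom A le"
abbreviation sc where "sc \<equiv> succ mem atom"

lemma el_iff[simp]: "z \<in> el x \<longleftrightarrow> mem z x" by (simp add: elts_def)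

lemma ext_el: "\<not> atom x \<Longrightarrow> \<not> atom y \<Longrightarrow> el x = el y \<Longrightarrow> x = y"
  by (rule extensionality) (auto simp: set_eq_iff)

lemma succ_ex: "\<exists>!s. \<not> atom s \<and> (\<forall>w. mem w s \<longleftrightarrow> mem w x \<or> w = x)"
proof -
  obtain p where p: "\<not> atom p" "\<forall>w. mem w p \<longleftrightarrow> w = x \<or> w = x" using pairing by blast
  obtain q where q: "\<not> atom q" "\<forall>w. mem w q \<longleftrightarrow> w = x \<or> w = p" using pairing by blast
  obtain u where u: "\<not> atom u" "\<forall>z. mem z u \<longleftrightarrow> (\<exists>y. mem y q \<and> mem z y)" using union by blast
  have "\<forall>w. mem w u \<longleftrightarrow> mem w x \<or> w = x"
  proof
    fix w
    have "mem w u \<longleftrightarrow> (\<exists>y. mem y q \<and> mem w y)" using u by blast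
    also have "\<dots> \<longleftrightarrow> mem w x \<or> mem w p" using q by auto
    also have "\<dots> \<longleftrightarrow> mem w x \<or> w = x" using p by blast
    finally show "mem w u \<longleftrightarrow> mem w x \<or> w = x" .
  qed
  then have "\<exists>s. \<not> atom s \<and> (\<forall>w. mem w s \<longleftrightarrow> mem w x \<or> w = x)" using u by blast
  moreover have "s = t" if "\<not> atom s \<and> (\<forall>w. mem w s \<longleftrightarrow> mem w x \<or> w = x)"
    "\<not> atom t \<and> (\<forall>w. mem w t \<longleftrightarrow> mem w x \<or> w = x)" for s t
  proof -
    have "\<forall>w. mem w s \<longleftrightarrow> mem w t" using that by blast
    then show ?thesis using that extensionality[of s t] by blast
  qed
  ultimately show ?thesis by blast
qed

lemma succ_prop: "\<not> atom (sc x)" "mem w (sc x) \<longleftrightarrow> mem w x \<or> w = x"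
  using theI'[OF succ_ex[of x]] unfolding succ_def by blast+

lemma no2cycle: "mem a b \<Longrightarrow> mem b a \<Longrightarrow> False"
  using wf_not_sym[OF foundation, of a b] by auto

lemma succ_inj: assumes "sc a = sc b" shows "a = b"
proof (rule ccontr)
  assume ne: "a \<noteq> b"
  have "mem a (sc b)" using assms succ_prop(2)[of a a] by simp
  then have 1: "mem a b" using ne succ_prop(2)[of a b] by simp
  have "mem b (sc a)" using assms succ_prop(2)[of b b] by simp
  then have "mem b a" using ne succ_prop(2)[of b a] by simp
  then show False using 1 no2cycle by blast
qed

lemma Uni_ex: "\<exists>!u. \<not> atom u \<and> el u = (\<Union>y\<in>el x. el y)"
proof -
  obtain u where u: "\<not> atom u" "\<forall>z. mem z u \<longleftrightarrow> (\<exists>y. mem y x \<and> mem z y)" using union by blast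
  have "el u = (\<Union>y\<in>el x. el y)" using u unfolding elts_def by auto
  then have e: "\<not> atom u \<and> el u = (\<Union>y\<in>el x. el y)" using u by blast
  show ?thesis
  proof (rule ex1I[of _ u])
    show "\<not> atom u \<and> el u = (\<Union>y\<in>el x. el y)" by (fact e)
    fix v assume "\<not> atom v \<and> el v = (\<Union>y\<in>el x. el y)"
    then show "v = u" using e ext_el[of v u] by simp
  qed
qed

lemma Uni_prop: "\<not> atom (Uni mem atom x)" "el (Uni mem atom x) = (\<Union>y\<in>el x. el y)"
  using theI'[OF Uni_ex[of x]] unfolding Uni_def by blast+

lemma Ord_elem: "Ord mem atom a \<Longrightarrow> mem y a \<Longrightarrow> Ord mem atom y"
  unfolding Ord_def transset_def by blast

lemma Ord_succ: assumes "Ord mem atom a" shows "Ord mem atom (sc a)"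
proof -
  have ta: "transset mem atom a" using assms unfolding Ord_def by simp
  have ty: "transset mem atom y" if "mem y (sc a)" for y
  proof -
    have "mem y a \<or> y = a" using that succ_prop(2)[of y a] by simp
    then show ?thesis using assms ta unfolding Ord_def by auto
  qed
  have "transset mem atom (sc a)" unfolding transset_def
  proof (intro conjI allI impI)
    show "\<not> atom (sc a)" by (rule succ_prop(1))
    fix y z assume "mem y (sc a)"
    then show "\<not> atom y" using ty[of y] unfolding transset_def by simp
    assume "mem z y"
    have "mem y a \<or> y = a" using \<open>mem y (sc a)\<close> succ_prop(2) by blast
    then have "mem z a" using \<open>mem z y\<close> ta unfolding transset_def by blast
    then show "mem z (sc a)" using succ_prop(2) by blast
  qed
  then show ?thesis using ty unfolding Ord_def by simp
qed

lemma succ_pred_unique: "\<exists>\<beta>. mem \<beta> a \<and> a = sc \<beta> \<Longrightarrow> \<exists>!\<beta>. mem \<beta> a \<and> a = sc \<beta>"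
  using succ_inj by blast

lemma Mv_unfold: "Mv a = (if \<not> Ord mem atom a then {}
            else if (\<exists>\<beta>. mem \<beta> a \<and> a = sc \<beta>) then
              (let \<beta> = (THE \<beta>. mem \<beta> a \<and> a = sc \<beta>) in
                 if el \<beta> = {} then LO_atoms mem atom A le else LO_sub mem atom (Mv \<beta>))
            else (\<Union>\<beta>\<in>{\<beta>. mem \<beta> a \<and> el \<beta> \<noteq> {}}. Mv \<beta>))"
proof -
  define F where "F = (\<lambda>H \<alpha>. if \<not> Ord mem atom \<alpha> then {}
            else if (\<exists>\<beta>. mem \<beta> \<alpha> \<and> \<alpha> = succ mem atom \<beta>) then
              (let \<beta> = (THE \<beta>. mem \<beta> \<alpha> \<and> \<alpha> = succ mem atom \<beta>) in
                 if elts mem \<beta> = {} then LO_atoms mem atom A le else LO_sub mem atom (H \<beta>))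
            else (\<Union>\<beta>\<in>{\<beta>. mem \<beta> \<alpha> \<and> elts mem \<beta> \<noteq> {}}. H \<beta>))"
  have M: "Mv = wfrec {(x,y). mem x y} F" unfolding Mlev_def F_def ..
  have "Mv a = F (cut Mv {(x,y). mem x y} a) a" using M wfrec[OF foundation] by simp
  also have "\<dots> = F Mv a"
  proof -
    have cutv: "cut Mv {(x,y). mem x y} a b = Mv b" if "mem b a" for b
      using that by (simp add: cut_apply)
    show ?thesis
    proof (cases "Ord mem atom a \<and> (\<exists>\<beta>. mem \<beta> a \<and> a = sc \<beta>)")
      case True
      then have "mem (THE \<beta>. mem \<beta> a \<and> a = sc \<beta>) a"
        using theI'[OF succ_pred_unique] by blast
      then show ?thesis using True unfolding F_def Let_def by (simp add: cutv)
    next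
      case False
      then show ?thesis unfolding F_def using cutv by auto
    qed
  qed
  finally show ?thesis unfolding F_def .
qed

lemma Mv_succ: assumes "Ord mem atom b"
  shows "Mv (sc b) = (if el b = {} then LO_atoms mem atom A le else LO_sub mem atom (Mv b))"
proof -
  have o: "Ord mem atom (sc b)" using Ord_succ assms by blast
  have m: "mem b (sc b)" using succ_prop(2) by blast
  have t: "(THE \<beta>. mem \<beta> (sc b) \<and> sc b = sc \<beta>) = b"
    using m succ_inj by blast
  show ?thesis using o m t by (subst Mv_unfold) auto
qed

lemma Mv_limit: assumes "Limit mem atom a"
  shows "Mv a = (\<Union>\<beta>\<in>{\<beta>. mem \<beta> a \<and> el \<beta> \<noteq> {}}. Mv \<beta>)"
  using assms unfolding Limit_def by (subst Mv_unfold) auto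

lemma Mv_inv: "\<forall>y\<in>Mv g. \<not> atom y \<and> el y \<noteq> {} \<and> ((\<forall>e\<in>el y. atom e) \<or> (\<forall>e\<in>el y. \<not> atom e))"
  using foundation
proof (induction g rule: wf_induct_rule)
  case (less g)
  show ?case
  proof (cases "Ord mem atom g \<and> (\<exists>\<beta>. mem \<beta> g \<and> g = sc \<beta>)")
    case True
    define b where "b = (THE \<beta>. mem \<beta> g \<and> g = sc \<beta>)"
    have mb: "mem b g"
      using theI'[OF succ_pred_unique] True unfolding b_def by blast
    have eq: "Mv g = (if el b = {} then LO_atoms mem atom A le else LO_sub mem atom (Mv b))"
      using True unfolding b_def by (subst Mv_unfold) (simp add: Let_def)
    have IH: "\<forall>y\<in>Mv b. \<not> atom y \<and> el y \<noteq> {} \<and> ((\<forall>e\<in>el y. atom e) \<or> (\<forall>e\<in>el y. \<not> atom e))"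
      using less mb by blast
    show ?thesis
    proof (cases "el b = {}")
      case True
      then show ?thesis using eq A_atoms unfolding LO_atoms_def elts_def by auto
    next
      case False
      then show ?thesis using eq IH unfolding LO_sub_def by auto
    qed
  next
    case False
    then show ?thesis using less by (subst Mv_unfold) auto
  qed
qed

lemma notM: "el u = {} \<or> ((\<exists>e\<in>el u. atom e) \<and> (\<exists>e\<in>el u. \<not> atom e)) \<Longrightarrow> u \<notin> Mclass mem atom A le"
  using Mv_inv unfolding Mclass_def by blast

lemma A_in_LO: "A \<in> LO_atoms mem atom A le"
proof -
  have "el A \<noteq> {}" using A_infinite by auto
  then show ?thesis using A_set unfolding LO_atoms_def pr_def by auto
qed

lemma case_zero: assumes "Ord mem atom a" "el a = {}"
  shows "\<exists>x \<in> Mv (sc a). Uni mem atom x \<notin> Mclass mem atom A le"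
proof -
  have "Mv (sc a) = LO_atoms mem atom A le" using Mv_succ[OF assms(1)] assms(2) by simp
  then have "A \<in> Mv (sc a)" using A_in_LO by simp
  moreover have "el (Uni mem atom A) = {}"
    using Uni_prop(2)[of A] A_atoms atom_no_elts unfolding elts_def by auto
  ultimately show ?thesis using notM by blast
qed

lemma min_elem: assumes "mem y a" "y \<notin> S"
  obtains e where "mem e a" "e \<notin> S" "\<And>z. mem z e \<Longrightarrow> mem z a \<Longrightarrow> z \<in> S"
proof -
  obtain e where e: "e \<in> {y. mem y a \<and> y \<notin> S}" "\<And>z. (z, e) \<in> {(x,y). mem x y} \<Longrightarrow> z \<notin> {y. mem y a \<and> y \<notin> S}"
    using wfE_min[OF foundation, of y "{y. mem y a \<and> y \<notin> S}"] assms by blast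
  then show ?thesis using that by blast
qed

lemma Ord_elem_trans: "Ord mem atom a \<Longrightarrow> mem y a \<Longrightarrow> transset mem atom y"
  unfolding Ord_def by simp

lemma Ord_elem_sub: "Ord mem atom a \<Longrightarrow> mem y a \<Longrightarrow> mem z y \<Longrightarrow> mem z a"
  unfolding Ord_def transset_def by blast

lemma Ord_nonatom: "Ord mem atom a \<Longrightarrow> \<not> atom a"
  unfolding Ord_def transset_def by simp

lemma el_succ: "el (sc b) = insert b (el b)"
  using succ_prop(2) unfolding elts_def by auto

lemma limit_levels: assumes L: "Limit mem atom a"
  obtains e1 e2 where "mem e1 a" "mem e2 a" "el e1 \<noteq> {}" "el e2 \<noteq> {}"
    "Mv e1 = LO_atoms mem atom A le" "Mv e2 = LO_sub mem atom (Mv e1)"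
proof -
  have O: "Ord mem atom a" and ne: "el a \<noteq> {}" and nl: "\<not> (\<exists>\<beta>. mem \<beta> a \<and> a = sc \<beta>)"
    using L unfolding Limit_def by auto
  have na: "\<not> atom a" using O Ord_nonatom by blast
  have ne_y: "\<not> atom y" if "mem y a" for y using Ord_elem_trans[OF O that] unfolding transset_def by simp
  obtain y where y: "mem y a" using ne unfolding elts_def by auto
  obtain z0 where z0: "mem z0 a" "\<And>z. mem z z0 \<Longrightarrow> mem z a \<Longrightarrow> False"
    using min_elem[of y a "{}"] y by auto
  have ez0: "el z0 = {}" using z0 Ord_elem_sub[OF O z0(1)] unfolding elts_def by blast
  have "\<exists>y. mem y a \<and> y \<noteq> z0"
  proof (rule ccontr)
    assume "\<not> ?thesis"
    then have "el a = {z0}" using z0(1) unfolding elts_def by blast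
    then have "el a = el (sc z0)" using el_succ[of z0] ez0 by simp
    then have "a = sc z0" using ext_el na succ_prop(1) by blast
    then show False using nl z0(1) by blast
  qed
  then obtain y1 where y1: "mem y1 a" "y1 \<notin> {z0}" by auto
  obtain e1 where e1: "mem e1 a" "e1 \<notin> {z0}" "\<And>z. mem z e1 \<Longrightarrow> mem z a \<Longrightarrow> z \<in> {z0}"
    using min_elem[OF y1] by blast
  have sub1: "el e1 \<subseteq> {z0}" using e1 Ord_elem_sub[OF O e1(1)] unfolding elts_def by blast
  have "el e1 \<noteq> {}"
  proof
    assume "el e1 = {}"
    then have "e1 = z0" using ext_el[of e1 z0] ne_y[OF e1(1)] ne_y[OF z0(1)] ez0 by simp
    then show False using e1(2) by simp
  qed
  then have ee1: "el e1 = {z0}" using sub1 by blast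
  have e1s: "e1 = sc z0"
    using ext_el[of e1 "sc z0"] ne_y[OF e1(1)] succ_prop(1) ee1 el_succ ez0 by simp
  have "\<exists>y. mem y a \<and> y \<notin> {z0, e1}"
  proof (rule ccontr)
    assume "\<not> ?thesis"
    then have "el a = {z0, e1}" using z0(1) e1(1) unfolding elts_def by blast
    then have "el a = el (sc e1)" using el_succ[of e1] ee1 by auto
    then have "a = sc e1" using ext_el na succ_prop(1) by blast
    then show False using nl e1(1) by blast
  qed
  then obtain y2 where y2: "mem y2 a" "y2 \<notin> {z0, e1}" by auto
  obtain e2 where e2: "mem e2 a" "e2 \<notin> {z0, e1}" "\<And>z. mem z e2 \<Longrightarrow> mem z a \<Longrightarrow> z \<in> {z0, e1}"
    using min_elem[OF y2] by blast
  have sub2: "el e2 \<subseteq> {z0, e1}" using e2 Ord_elem_sub[OF O e2(1)] unfolding elts_def by blast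
  have te2: "transset mem atom e2" using Ord_elem_trans[OF O e2(1)] .
  have "mem e1 e2"
  proof (rule ccontr)
    assume "\<not> mem e1 e2"
    then have "el e2 \<subseteq> {z0}" using sub2 unfolding elts_def by auto
    then have "el e2 = {} \<or> el e2 = {z0}" by blast
    then have "e2 = z0 \<or> e2 = e1"
      using ext_el[of e2 z0] ext_el[of e2 e1] ne_y[OF e2(1)] ne_y[OF z0(1)] ne_y[OF e1(1)] ez0 ee1 by auto
    then show False using e2(2) by simp
  qed
  moreover have "mem z0 e1" using ee1 unfolding elts_def by auto
  ultimately have "mem z0 e2" using te2 unfolding transset_def by blast
  then have ee2: "el e2 = {z0, e1}" using sub2 \<open>mem e1 e2\<close> unfolding elts_def by auto
  have e2s: "e2 = sc e1"
    using ext_el[of e2 "sc e1"] ne_y[OF e2(1)] succ_prop(1) ee2 el_succ ee1 by auto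
  have Oz0: "Ord mem atom z0" using Ord_elem[OF O z0(1)] .
  have Oe1: "Ord mem atom e1" using Ord_elem[OF O e1(1)] .
  have "Mv e1 = LO_atoms mem atom A le" using Mv_succ[OF Oz0] ez0 e1s by simp
  moreover have "Mv e2 = LO_sub mem atom (Mv e1)" using Mv_succ[OF Oe1] \<open>el e1 \<noteq> {}\<close> e2s by simp
  moreover have "el e2 \<noteq> {}" using ee2 by simp
  ultimately show ?thesis using that e1(1) e2(1) \<open>el e1 \<noteq> {}\<close> by blast
qed

lemma case_limit: assumes L: "Limit mem atom a"
  shows "\<exists>x \<in> Mv (sc a). Uni mem atom x \<notin> Mclass mem atom A le"
proof -
  obtain e1 e2 where e: "mem e1 a" "mem e2 a" "el e1 \<noteq> {}" "el e2 \<noteq> {}"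
    "Mv e1 = LO_atoms mem atom A le" "Mv e2 = LO_sub mem atom (Mv e1)"
    using limit_levels[OF L] by blast
  have O: "Ord mem atom a" and ne: "el a \<noteq> {}" using L unfolding Limit_def by auto
  define M1 where "M1 = LO_atoms mem atom A le"
  have sub1: "M1 \<subseteq> Mv a" using Mv_limit[OF L] e unfolding M1_def by auto
  have sub2: "LO_sub mem atom M1 \<subseteq> Mv a" using Mv_limit[OF L] e unfolding M1_def by auto
  have AM1: "A \<in> M1" using A_in_LO unfolding M1_def .
  have elA: "el A \<noteq> {}" using A_infinite by auto
  obtain pA where pA: "\<not> atom pA" "\<forall>z. mem z pA \<longleftrightarrow> \<not> atom z \<and> (\<forall>w. mem w z \<longrightarrow> mem w A)"
    using power by blast
  obtain m1 where m1: "\<not> atom m1" "\<forall>z. mem z m1 \<longleftrightarrow> mem z pA \<and> z \<in> M1"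
    using separation[where x=pA and P="\<lambda>z. z \<in> M1"] by blast
  have em1: "el m1 = M1"
  proof
    show "el m1 \<subseteq> M1" using m1 unfolding elts_def by auto
    show "M1 \<subseteq> el m1"
    proof
      fix z assume z: "z \<in> M1"
      then have "\<not> atom z" "\<forall>w. mem w z \<longrightarrow> mem w A" unfolding M1_def LO_atoms_def elts_def by auto
      then show "z \<in> el m1" using m1 pA z unfolding elts_def by auto
    qed
  qed
  have m1M2: "m1 \<in> LO_sub mem atom M1"
    unfolding LO_sub_def using m1(1) em1 AM1 by auto
  have m1a: "m1 \<in> Mv a" using m1M2 sub2 by auto
  have Aa: "A \<in> Mv a" using AM1 sub1 by auto
  obtain pm where pm: "\<not> atom pm" "\<forall>z. mem z pm \<longleftrightarrow> \<not> atom z \<and> (\<forall>w. mem w z \<longrightarrow> mem w m1)"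
    using power by blast
  obtain q where q: "\<not> atom q" "\<forall>w. mem w q \<longleftrightarrow> w = pA \<or> w = pm" using pairing by blast
  obtain U where U: "\<not> atom U" "\<forall>z. mem z U \<longleftrightarrow> (\<exists>y. mem y q \<and> mem z y)" using union by blast
  have U': "mem z U \<longleftrightarrow> mem z pA \<or> mem z pm" for z using U q by auto
  obtain x where x: "\<not> atom x" "\<forall>z. mem z x \<longleftrightarrow> mem z U \<and> z \<in> Mv a"
    using separation[where x=U and P="\<lambda>z. z \<in> Mv a"] by blast
  have memx: "mem z x \<longleftrightarrow> (mem z pA \<or> mem z pm) \<and> z \<in> Mv a" for z using x U' by blast
  have nat: "\<not> atom y" if "y \<in> Mv a" for y using Mv_inv that by blast
  have Ax: "mem A x" using memx pA A_set Aa by auto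
  have m1x: "mem m1 x" using memx pm m1(1) m1a by auto
  have "x \<in> LO_sub mem atom (Mv a)"
    unfolding LO_sub_def
  proof (intro CollectI conjI ballI impI)
    show "\<not> atom x" by (fact x(1))
    show "el x \<noteq> {}" using Ax unfolding elts_def by auto
    show "el x \<subseteq> Mv a" using memx unfolding elts_def by auto
    fix y z assume y: "y \<in> el x" and z: "z \<in> Mv a" and s: "el z \<subseteq> el y"
    have my: "(mem y pA \<or> mem y pm)" using y memx unfolding elts_def by auto
    have "mem z pA \<or> mem z pm"
    proof (cases "mem y pA")
      case True
      then show ?thesis using s pA nat[OF z] unfolding elts_def by auto
    next
      case False
      then have "mem y pm" using my by simp
      then show ?thesis using s pm nat[OF z] unfolding elts_def by auto
    qed
    then show "z \<in> el x" using memx z unfolding elts_def by auto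
  qed
  moreover have "Mv (sc a) = LO_sub mem atom (Mv a)" using Mv_succ[OF O] ne by simp
  ultimately have xin: "x \<in> Mv (sc a)" by simp
  obtain b where b: "mem b A" using elA unfolding elts_def by auto
  have "b \<in> el (Uni mem atom x)" using Uni_prop(2)[of x] b Ax unfolding elts_def by auto
  moreover have "atom b" using A_atoms b .
  moreover have "A \<in> el (Uni mem atom x)" using Uni_prop(2)[of x] m1x AM1 em1 by auto
  ultimately have "Uni mem atom x \<notin> Mclass mem atom A le" using notM A_set by blast
  then show ?thesis using xin by blast
qed

end

theorem fact4p13:
  fixes mem :: "'v \<Rightarrow> 'v \<Rightarrow> bool" and atom :: "'v \<Rightarrow> bool" and A :: 'v
    and le :: "'v \<Rightarrow> 'v \<Rightarrow> bool" and \<alpha> :: 'v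
  assumes "zfa mem atom A le"
    and "Ord mem atom \<alpha>"
    and "elts mem \<alpha> = {} \<or> Limit mem atom \<alpha>"
  shows "\<exists>x \<in> Mlev mem atom A le (succ mem atom \<alpha>). Uni mem atom x \<notin> Mclass mem atom A le"
proof -
  interpret zfa mem atom A le by fact
  show ?thesis using assms(3) case_zero[OF assms(2)] case_limit by blast
qed

end
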